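(* Let $G$ be a Lie group, $H\subseteq G$ a closed subgroup, and $\mathfrak{g}=\mathfrak{h}\oplus\mathfrak{m}$ a reductive decomposition. Equip $G/H$ with a $G$-invariant Riemannian metric (an $\mathrm{Ad}(H)$-invariant inner product $\langle\cdot,\cdot\rangle$ on $\mathfrak{m}$) with Levi-Civita connection $\nabla$. Suppose the difference Ricci tensor $\mathrm{Ric}^d$ is a Codazzi tensor field on $G/H$ with $\nabla\mathrm{Ric}^d\neq 0$, and let $\mathfrak{m}=\mathfrak{m}_1\oplus\cdots\oplus\mathfrak{m}_r$ be its $\langle\cdot,\cdot\rangle$-orthogonal eigenspace decomposition on $\mathfrak{m}$, with $\mathfrak{m}_i$ corresponding to the eigenvalue $\lambda_i$ and $\lambda_1<\cdots<\lambda_r$. If $\mathrm{s}^d_i\ge 0$ for $1\le i\le r-1$, then $\mathrm{s}^d_r\neq 0$. In particular, not all the eigenspaces $\mathfrak{m}_i$ of $\mathrm{Ric}^d$ can be Abelian subalgebras of $(\mathfrak{m},[\cdot,\cdot]_{\mathfrak{m}})$.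
   Context: A reductive decomposition means $\mathfrak{m}$ is an $\mathrm{Ad}(H)$-invariant vector space complement of $\mathfrak{h}$ in $\mathfrak{g}$; $[X,Y]_{\mathfrak{m}}$, $[X,Y]_{\mathfrak{h}}$ are the components of $[X,Y]$ in $\mathfrak{g}=\mathfrak{h}\oplus\mathfrak{m}$, and $\mathfrak{m}\cong T_{eH}(G/H)$. $G$-invariant tensor fields correspond to $\mathrm{Ad}(H)$-invariant tensors on $\mathfrak{m}$. A Codazzi tensor field is a symmetric twice-covariant tensor field $A$ with $(\nabla_XA)(Y,Z)=(\nabla_YA)(X,Z)$ for all vector fields. The Levi-Civita product $\alpha:\mathfrak{m}\times\mathfrak{m}\to\mathfrak{m}$ is defined by $2\langle\alpha(X,Y),Z\rangle=\langle[X,Y]_{\mathfrak{m}},Z\rangle-\langle X,[Y,Z]_{\mathfrak{m}}\rangle-\langle[X,Z]_{\mathfrak{m}},Y\rangle$. The difference curvature tensor is $R^d=R-R^0$, where $R$ is the Riemann curvature at $eH$ and $R^0(X,Y)Z=-[[X,Y]_{\mathfrak{h}},Z]$ is the curvature of the canonical connection of the second kind; explicitly $R^d(X,Y)Z=\alpha(X,\alpha(Y,Z))-\alpha(Y,\alpha(X,Z))-\alpha([X,Y]_{\mathfrak{m}},Z)$ for $X,Y,Z\in\mathfrak{m}$. The difference Ricci tensor is the $G$-invariant tensor field corresponding to $\mathrm{Ric}^d(Y,Z)=\mathrm{tr}(X\mapsto R^d(X,Y)Z)$ on $\mathfrak{m}$; $\mathrm{s}^d$ is its $\langle\cdot,\cdot\rangle$-trace.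 For $Y_i,Z_i\in\mathfrak{m}_i$, the endomorphism $X\mapsto R^d(X,Y_i)Z_i$ preserves $\mathfrak{m}_i$; $\mathrm{Ric}^d_i(Y_i,Z_i)$ is the trace of its restriction to $\mathfrak{m}_i$, and $\mathrm{s}^d_i$ is the trace of $\mathrm{Ric}^d_i$ with respect to $\langle\cdot,\cdot\rangle|_{\mathfrak{m}_i\times\mathfrak{m}_i}$. *)

theory Defs
  imports "HOL-Analysis.Analysis"
begin

text \<open>
  Algebraic model of the reductive homogeneous space G/H at the origin eH.
  The Lie algebra g = h (+) m is modelled as the product type 'h \<times> 'm, where
  h = 'h \<times> {0} and m = {0} \<times> 'm.  The type 'm (class euclidean_space) carries
  the Ad(H)-invariant inner product on m (its own inner product).
\<close>

definition lie_algebra :: "(('h::real_vector \<times> 'm::real_vector) \<Rightarrow> ('h \<times> 'm) \<Rightarrow> ('h \<times> 'm)) \<Rightarrow> bool" where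
  "lie_algebra br \<longleftrightarrow>
     (\<forall>x. linear (br x)) \<and> (\<forall>y. linear (\<lambda>x. br x y)) \<and>
     (\<forall>x y. br x y = - br y x) \<and>
     (\<forall>x y z. br x (br y z) + br y (br z x) + br z (br x y) = 0)"

text \<open>Reductive decomposition: h is a subalgebra and [h,m] \<subseteq> m.
  Invariance of the inner product (infinitesimal form of Ad(H)-invariance):
  ad(A) restricted to m is skew-symmetric for A in h.\<close>
definition reductive_invariant ::
  "(('h::real_vector \<times> 'm::real_inner) \<Rightarrow> ('h \<times> 'm) \<Rightarrow> ('h \<times> 'm)) \<Rightarrow> bool" where
  "reductive_invariant br \<longleftrightarrow>
     (\<forall>a b. snd (br (a, 0) (b, 0)) = 0) \<and>
     (\<forall>a x. fst (br (a, 0) (0, x)) = 0) \<and>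
     (\<forall>a x y. inner (snd (br (a, 0) (0, x))) y + inner x (snd (br (a, 0) (0, y))) = 0)"

definition brm :: "(('h::real_vector \<times> 'm::real_vector) \<Rightarrow> ('h \<times> 'm) \<Rightarrow> ('h \<times> 'm)) \<Rightarrow> 'm \<Rightarrow> 'm \<Rightarrow> 'm" where
  "brm br X Y = snd (br (0, X) (0, Y))"

text \<open>Levi-Civita product: 2<alpha(X,Y),Z> = <[X,Y]_m,Z> - <X,[Y,Z]_m> - <[X,Z]_m,Y>,
  written out in an orthonormal basis of m.\<close>
definition lc_alpha :: "(('h::real_vector \<times> 'm::euclidean_space) \<Rightarrow> ('h \<times> 'm) \<Rightarrow> ('h \<times> 'm)) \<Rightarrow> 'm \<Rightarrow> 'm \<Rightarrow> 'm" where
  "lc_alpha br X Y = (\<Sum>e\<in>Basis.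
      ((inner (brm br X Y) e - inner X (brm br Y e) - inner (brm br X e) Y) / 2) *\<^sub>R e)"

definition Rd :: "(('h::real_vector \<times> 'm::euclidean_space) \<Rightarrow> ('h \<times> 'm) \<Rightarrow> ('h \<times> 'm)) \<Rightarrow> 'm \<Rightarrow> 'm \<Rightarrow> 'm \<Rightarrow> 'm" where
  "Rd br X Y Z = lc_alpha br X (lc_alpha br Y Z) - lc_alpha br Y (lc_alpha br X Z)
                 - lc_alpha br (brm br X Y) Z"

definition Ricd :: "(('h::real_vector \<times> 'm::euclidean_space) \<Rightarrow> ('h \<times> 'm) \<Rightarrow> ('h \<times> 'm)) \<Rightarrow> 'm \<Rightarrow> 'm \<Rightarrow> real" where
  "Ricd br Y Z = (\<Sum>e\<in>Basis. inner (Rd br e Y Z) e)"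

text \<open>Covariant derivative at eH of the G-invariant tensor field Ric^d with respect to the
  Levi-Civita connection (Nomizu: the Levi-Civita connection corresponds to
  X \<mapsto> alpha(X,-), and the canonical connection kills invariant tensors):
  (\<nabla>_X Ric^d)(Y,Z) = - Ric^d(alpha(X,Y),Z) - Ric^d(Y,alpha(X,Z)).
  By G-invariance, Codazzi / non-parallelity on G/H is equivalent to the same at eH.\<close>
definition nabla_Ricd :: "(('h::real_vector \<times> 'm::euclidean_space) \<Rightarrow> ('h \<times> 'm) \<Rightarrow> ('h \<times> 'm)) \<Rightarrow> 'm \<Rightarrow> 'm \<Rightarrow> 'm \<Rightarrow> real" where
  "nabla_Ricd br X Y Z = - Ricd br (lc_alpha br X Y) Z - Ricd br Y (lc_alpha br X Z)"

definition Ricd_codazzi :: "(('h::real_vector \<times> 'm::euclidean_space) \<Rightarrow> ('h \<times> 'm) \<Rightarrow> ('h \<times> 'm)) \<Rightarrow> bool" where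
  "Ricd_codazzi br \<longleftrightarrow>
     (\<forall>Y Z. Ricd br Y Z = Ricd br Z Y) \<and>
     (\<forall>X Y Z. nabla_Ricd br X Y Z = nabla_Ricd br Y X Z)"

definition Ricd_op :: "(('h::real_vector \<times> 'm::euclidean_space) \<Rightarrow> ('h \<times> 'm) \<Rightarrow> ('h \<times> 'm)) \<Rightarrow> 'm \<Rightarrow> 'm" where
  "Ricd_op br Y = (\<Sum>e\<in>Basis. Ricd br Y e *\<^sub>R e)"

definition Ricd_eigenvalues :: "(('h::real_vector \<times> 'm::euclidean_space) \<Rightarrow> ('h \<times> 'm) \<Rightarrow> ('h \<times> 'm)) \<Rightarrow> real set" where
  "Ricd_eigenvalues br = {l. \<exists>v. v \<noteq> 0 \<and> Ricd_op br v = l *\<^sub>R v}"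

text \<open>Number r of distinct eigenvalues, and lambda_1 < ... < lambda_r (indices 1..r).\<close>
definition n_eig :: "(('h::real_vector \<times> 'm::euclidean_space) \<Rightarrow> ('h \<times> 'm) \<Rightarrow> ('h \<times> 'm)) \<Rightarrow> nat" where
  "n_eig br = card (Ricd_eigenvalues br)"

definition eig :: "(('h::real_vector \<times> 'm::euclidean_space) \<Rightarrow> ('h \<times> 'm) \<Rightarrow> ('h \<times> 'm)) \<Rightarrow> nat \<Rightarrow> real" where
  "eig br i = sorted_list_of_set (Ricd_eigenvalues br) ! (i - 1)"

definition eigsp :: "(('h::real_vector \<times> 'm::euclidean_space) \<Rightarrow> ('h \<times> 'm) \<Rightarrow> ('h \<times> 'm)) \<Rightarrow> nat \<Rightarrow> 'm set" where
  "eigsp br i = {v. Ricd_op br v = eig br i *\<^sub>R v}"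

definition is_onb :: "'m::real_inner set \<Rightarrow> 'm set \<Rightarrow> bool" where
  "is_onb V B \<longleftrightarrow> finite B \<and> B \<subseteq> V \<and> span B = V \<and> pairwise orthogonal B \<and> (\<forall>b\<in>B. norm b = 1)"

definition onb :: "'m::real_inner set \<Rightarrow> 'm set" where
  "onb V = (SOME B. is_onb V B)"

definition Ricd_i :: "(('h::real_vector \<times> 'm::euclidean_space) \<Rightarrow> ('h \<times> 'm) \<Rightarrow> ('h \<times> 'm)) \<Rightarrow> nat \<Rightarrow> 'm \<Rightarrow> 'm \<Rightarrow> real" where
  "Ricd_i br i Y Z = (\<Sum>f\<in>onb (eigsp br i). inner (Rd br f Y Z) f)"

definition sd_i :: "(('h::real_vector \<times> 'm::euclidean_space) \<Rightarrow> ('h \<times> 'm) \<Rightarrow> ('h \<times> 'm)) \<Rightarrow> nat \<Rightarrow> real" where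
  "sd_i br i = (\<Sum>e\<in>onb (eigsp br i). Ricd_i br i e e)"

definition abelian_in_m :: "(('h::real_vector \<times> 'm::real_vector) \<Rightarrow> ('h \<times> 'm) \<Rightarrow> ('h \<times> 'm)) \<Rightarrow> 'm set \<Rightarrow> bool" where
  "abelian_in_m br V \<longleftrightarrow> (\<forall>X\<in>V. \<forall>Y\<in>V. brm br X Y = 0)"

end

theory Submission
  imports Defs
begin


lemma vec_eq_by_inner:
  fixes u v :: "'a::real_inner"
  assumes "\<And>z. inner u z = inner v z"
  shows "u = v"
  using assms by (metis inner_commute vector_eq_ldot)

lemma sum_basis_linear:
  fixes f :: "'m::euclidean_space \<Rightarrow> real"
  assumes "linear f"
  shows "(\<Sum>e\<in>Basis. f e * inner e z) = f z"
proof -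
  have "f z = f (\<Sum>e\<in>Basis. inner z e *\<^sub>R e)" by (simp add: euclidean_representation)
  also have "\<dots> = (\<Sum>e\<in>Basis. inner z e * f e)"
    using assms by (simp add: linear_sum linear_scale)
  finally show ?thesis by (simp add: inner_commute mult.commute)
qed

definition onbE :: "'m::euclidean_space set \<Rightarrow> bool" where
  "onbE E \<longleftrightarrow> finite E \<and> pairwise orthogonal E \<and> (\<forall>e\<in>E. norm e = 1) \<and> span E = UNIV"

lemma onbE_expand:
  assumes "onbE E" shows "(\<Sum>e\<in>E. inner x e *\<^sub>R e) = x"
  using assms unfolding onbE_def by (intro orthonormal_basis_expand) auto

lemma onbE_parseval:
  assumes "onbE E" shows "inner u v = (\<Sum>e\<in>E. inner u e * inner v e)"
proof -
  have "inner u v = inner u (\<Sum>e\<in>E. inner v e *\<^sub>R e)" using onbE_expand[OF assms] by simp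
  also have "\<dots> = (\<Sum>e\<in>E. inner u e * inner v e)" by (simp add: inner_sum_right mult.commute)
  finally show ?thesis .
qed

lemma onbE_lin:
  assumes "onbE E" "linear f" shows "f x = (\<Sum>e\<in>E. inner x e *\<^sub>R f e)"
proof -
  have "f x = f (\<Sum>e\<in>E. inner x e *\<^sub>R e)" using onbE_expand[OF assms(1)] by simp
  also have "\<dots> = (\<Sum>e\<in>E. inner x e *\<^sub>R f e)" using assms(2) by (simp add: linear_sum linear_scale)
  finally show ?thesis .
qed

lemma onbE_trace:
  fixes T :: "'m::euclidean_space \<Rightarrow> 'm"
  assumes "onbE E" "linear T"
  shows "(\<Sum>b\<in>Basis. inner (T b) b) = (\<Sum>e\<in>E. inner (T e) e)"
proof -
  have "(\<Sum>b\<in>Basis. inner (T b) b) = (\<Sum>b\<in>Basis. \<Sum>e\<in>E. inner b e * inner (T e) b)"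
    by (subst onbE_lin[OF assms]) (simp add: inner_sum_left)
  also have "\<dots> = (\<Sum>e\<in>E. \<Sum>b\<in>Basis. inner (T e) b * inner e b)"
    by (subst sum.swap) (simp add: inner_commute mult.commute)
  also have "\<dots> = (\<Sum>e\<in>E. inner (T e) e)"
    by (rule sum.cong[OF refl]) (rule euclidean_inner[symmetric])
  finally show ?thesis .
qed

locale LA =
  fixes br :: "('h::real_vector \<times> 'm::euclidean_space) \<Rightarrow> ('h \<times> 'm) \<Rightarrow> ('h \<times> 'm)"
  assumes lie: "lie_algebra br"
begin

lemma br_lin2: "linear (br x)" using lie unfolding lie_algebra_def by blast
lemma br_lin1: "linear (\<lambda>x. br x y)" using lie unfolding lie_algebra_def by blast
lemma br_skew: "br x y = - br y x" using lie unfolding lie_algebra_def by blast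

lemma brm_skew: "brm br X Y = - brm br Y X"
  unfolding brm_def by (subst br_skew) simp

lemma brm_add2: "brm br X (Y1 + Y2) = brm br X Y1 + brm br X Y2"
proof -
  have "br (0, X) ((0, Y1) + (0, Y2)) = br (0,X) (0,Y1) + br (0,X) (0,Y2)"
    using linear_add[OF br_lin2] by blast
  then show ?thesis unfolding brm_def by simp
qed

lemma brm_scale2: "brm br X (c *\<^sub>R Y) = c *\<^sub>R brm br X Y"
proof -
  have "br (0, X) (c *\<^sub>R (0, Y)) = c *\<^sub>R br (0,X) (0,Y)"
    using linear_scale[OF br_lin2] by blast
  then show ?thesis unfolding brm_def by simp
qed

lemma brm_add1: "brm br (X1 + X2) Y = brm br X1 Y + brm br X2 Y"
  by (metis brm_skew brm_add2 minus_add_distrib)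

lemma brm_scale1: "brm br (c *\<^sub>R X) Y = c *\<^sub>R brm br X Y"
  by (metis brm_skew brm_scale2 scaleR_minus_right)

lemma linear_brm2: "linear (brm br X)"
  by (rule linearI) (simp_all add: brm_add2 brm_scale2)

lemma linear_brm1: "linear (\<lambda>X. brm br X Y)"
  by (rule linearI) (simp_all add: brm_add1 brm_scale1)

definition "cc X Y Z = inner (brm br X Y) Z"
definition "AA X Y Z = inner (lc_alpha br X Y) Z"

lemma alpha_inner:
  "inner (lc_alpha br X Y) Z = (inner (brm br X Y) Z - inner X (brm br Y Z) - inner (brm br X Z) Y) / 2"
proof -
  let ?f = "\<lambda>e. (inner (brm br X Y) e - inner X (brm br Y e) - inner (brm br X e) Y) / 2"
  have lf: "linear ?f"
    by (rule linearI) (simp_all add: brm_add2 brm_scale2 inner_add_left inner_add_right field_simps)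
  have "inner (lc_alpha br X Y) Z = (\<Sum>e\<in>Basis. ?f e * inner e Z)"
    unfolding lc_alpha_def by (simp add: inner_sum_left)
  also have "\<dots> = ?f Z" by (rule sum_basis_linear[OF lf])
  finally show ?thesis .
qed

lemma alpha_skew: "inner (lc_alpha br X Y) Z = - inner (lc_alpha br X Z) Y"
  unfolding alpha_inner using brm_skew[of Z Y] by (simp add: inner_commute field_simps)

lemma alpha_diff: "lc_alpha br X Y - lc_alpha br Y X = brm br X Y"
proof (rule vec_eq_by_inner)
  fix z
  show "inner (lc_alpha br X Y - lc_alpha br Y X) z = inner (brm br X Y) z"
    unfolding inner_diff_left alpha_inner
    using brm_skew[of Y X] brm_skew[of z X] brm_skew[of Y z]
    by (simp add: inner_commute field_simps)
qed

lemma alpha_add1: "lc_alpha br (X1 + X2) Y = lc_alpha br X1 Y + lc_alpha br X2 Y"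
  by (rule vec_eq_by_inner) (simp add: inner_add_left alpha_inner brm_add1 inner_add_right field_simps)
lemma alpha_scale1: "lc_alpha br (c *\<^sub>R X) Y = c *\<^sub>R lc_alpha br X Y"
  by (rule vec_eq_by_inner) (simp add: alpha_inner brm_scale1 field_simps)
lemma alpha_add2: "lc_alpha br X (Y1 + Y2) = lc_alpha br X Y1 + lc_alpha br X Y2"
  by (rule vec_eq_by_inner) (simp add: inner_add_left alpha_inner brm_add1 brm_add2 inner_add_right field_simps)
lemma alpha_scale2: "lc_alpha br X (c *\<^sub>R Y) = c *\<^sub>R lc_alpha br X Y"
  by (rule vec_eq_by_inner) (simp add: alpha_inner brm_scale1 brm_scale2 field_simps)

lemma linear_alpha1: "linear (\<lambda>X. lc_alpha br X Y)"
  by (rule linearI) (simp_all add: alpha_add1 alpha_scale1)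
lemma linear_alpha2: "linear (lc_alpha br X)"
  by (rule linearI) (simp_all add: alpha_add2 alpha_scale2)

lemma linear_Rd1: "linear (\<lambda>X. Rd br X Y Z)"
  unfolding Rd_def
  by (intro linear_compose_sub linear_compose[OF linear_alpha1 linear_alpha2, unfolded o_def]
       linear_compose[OF linear_brm1 linear_alpha1, unfolded o_def] linear_alpha1
       linear_compose[OF linear_alpha1, unfolded o_def] linear_compose[OF _ linear_alpha2, unfolded o_def])

lemma AA_skew: "AA X Y Z = - AA X Z Y"
  unfolding AA_def using alpha_skew .

lemma K_expand:
  assumes E: "onbE E"
  shows "inner (Rd br x y y) x =
    (\<Sum>z\<in>E. - AA x x z * AA y y z + AA x y z * AA y x z + cc x y z * AA z x y)"
proof -
  have 1: "inner (lc_alpha br x (lc_alpha br y y)) x = - (\<Sum>z\<in>E. AA x x z * AA y y z)"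
    using alpha_skew[of x "lc_alpha br y y" x] onbE_parseval[OF E, of "lc_alpha br x x" "lc_alpha br y y"]
    by (simp add: AA_def)
  have 2: "inner (lc_alpha br y (lc_alpha br x y)) x = - (\<Sum>z\<in>E. AA x y z * AA y x z)"
    using alpha_skew[of y "lc_alpha br x y" x] onbE_parseval[OF E, of "lc_alpha br y x" "lc_alpha br x y"]
    by (simp add: AA_def mult.commute)
  have "lc_alpha br (brm br x y) y = (\<Sum>z\<in>E. inner (brm br x y) z *\<^sub>R lc_alpha br z y)"
    by (rule onbE_lin[OF E linear_alpha1])
  then have 3: "inner (lc_alpha br (brm br x y) y) x = - (\<Sum>z\<in>E. cc x y z * AA z x y)"
    by (simp add: inner_sum_left AA_def cc_def alpha_skew[of _ y x] sum_negf)
  show ?thesis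
    unfolding Rd_def inner_diff_left 1 2 3 by (simp only: sum.distrib) (simp add: sum_negf)
qed

end

locale LAC = LA +
  assumes cod: "Ricd_codazzi br"
begin

lemma Ricd_sym: "Ricd br Y Z = Ricd br Z Y"
  using cod unfolding Ricd_codazzi_def by blast

lemma nabla_sym: "nabla_Ricd br X Y Z = nabla_Ricd br Y X Z"
  using cod unfolding Ricd_codazzi_def by blast

lemma linear_Rd3: "linear (Rd br X Y)"
proof -
  have eq: "Rd br X Y = (\<lambda>Z. lc_alpha br X (lc_alpha br Y Z) - lc_alpha br Y (lc_alpha br X Z) - lc_alpha br (brm br X Y) Z)"
    unfolding Rd_def by (rule ext) simp
  have "linear (\<lambda>Z. lc_alpha br X (lc_alpha br Y Z) - lc_alpha br Y (lc_alpha br X Z) - lc_alpha br (brm br X Y) Z)"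
    by (intro linear_compose_sub linear_compose[OF linear_alpha2 linear_alpha2, unfolded o_def] linear_alpha2)
  then show ?thesis by (subst eq)
qed

lemma linear_Ricd2: "linear (Ricd br Y)"
proof (rule linearI)
  fix a b show "Ricd br Y (a + b) = Ricd br Y a + Ricd br Y b"
    unfolding Ricd_def by (simp add: linear_add[OF linear_Rd3] inner_add_left sum.distrib)
next
  fix c a show "Ricd br Y (c *\<^sub>R a) = c *\<^sub>R Ricd br Y a"
    unfolding Ricd_def by (simp add: linear_scale[OF linear_Rd3] sum_distrib_left)
qed

abbreviation "LL \<equiv> Ricd_op br"

lemma LL_inner: "inner (LL Y) Z = Ricd br Y Z"
  unfolding Ricd_op_def inner_sum_left using sum_basis_linear[OF linear_Ricd2] by simp

lemma LL_sym: "inner (LL Y) Z = inner Y (LL Z)"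
  by (metis LL_inner Ricd_sym inner_commute)

lemma LL_linear: "linear LL"
proof (rule linearI)
  fix a b show "LL (a + b) = LL a + LL b"
  proof (rule vec_eq_by_inner)
    fix z show "inner (LL (a + b)) z = inner (LL a + LL b) z"
      by (simp add: LL_inner inner_add_left Ricd_sym[of _ z] linear_add[OF linear_Ricd2])
  qed
next
  fix c a show "LL (c *\<^sub>R a) = c *\<^sub>R LL a"
  proof (rule vec_eq_by_inner)
    fix z show "inner (LL (c *\<^sub>R a)) z = inner (c *\<^sub>R LL a) z"
      by (simp add: LL_inner Ricd_sym[of _ z] linear_scale[OF linear_Ricd2])
  qed
qed

lemma Ricd_trace:
  assumes E: "onbE E"
  shows "Ricd br y y = (\<Sum>x\<in>E. inner (Rd br x y y) x)"
  unfolding Ricd_def by (rule onbE_trace[OF E linear_Rd1])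

lemma cod_rel:
  assumes "LL x = p *\<^sub>R x" "LL y = q *\<^sub>R y" "LL z = w *\<^sub>R z"
  shows "(q - w) * AA x y z = (p - w) * AA y x z"
proof -
  have g: "nabla_Ricd br u v z = (lv - w) * AA u v z" if "LL v = lv *\<^sub>R v" for u v lv
  proof -
    have a: "Ricd br (lc_alpha br u v) z = w * AA u v z"
      using Ricd_sym[of "lc_alpha br u v" z] LL_inner[of z "lc_alpha br u v"] assms(3)
      by (simp add: AA_def inner_commute)
    have b: "Ricd br v (lc_alpha br u z) = - lv * AA u v z"
      using LL_inner[of v "lc_alpha br u z"] that AA_skew[of u v z]
      by (simp add: AA_def inner_commute)
    show ?thesis unfolding nabla_Ricd_def a b by (simp add: algebra_simps)
  qed
  show ?thesis using g[OF assms(2), of x] g[OF assms(1), of y] nabla_sym[of x y z] by simp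
qed

end


lemma quad_zero:
  fixes b c :: real
  assumes "\<And>t. 2 * t * b + t^2 * c \<le> 0"
  shows "b = 0"
proof (rule ccontr)
  assume nb: "b \<noteq> 0"
  define d where "d = \<bar>c\<bar> + 1"
  have d: "d > 0" unfolding d_def by simp
  have "2 * (b/d) * b + (b/d)^2 * c \<le> 0" by (rule assms)
  then have "b^2 * (2 * d + c) / d^2 \<le> 0"
    using d by (simp add: field_simps power2_eq_square)
  then have "b^2 * (2 * d + c) \<le> 0" using d by (simp add: divide_le_0_iff)
  moreover have "2 * d + c > 0" unfolding d_def by (cases "c \<ge> 0") auto
  moreover have "b^2 > 0" using nb by simp
  ultimately show False by (simp add: mult_le_0_iff)
qed

lemma spectral:
  fixes L :: "'m::euclidean_space \<Rightarrow> 'm"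
  assumes lin: "linear L" and sym: "\<And>x y. inner (L x) y = inner x (L y)"
  shows "span {v. \<exists>l. L v = l *\<^sub>R v} = UNIV"
proof (rule ccontr)
  let ?S = "{v. \<exists>l. L v = l *\<^sub>R v}"
  assume "span ?S \<noteq> UNIV"
  then obtain a where a: "a \<noteq> 0" "\<forall>x\<in>span ?S. inner a x = 0"
    using span_not_UNIV_orthogonal by blast
  define W where "W = {w. \<forall>x\<in>span ?S. inner w x = 0}"
  have subW: "subspace W"
    unfolding subspace_def W_def by (simp add: inner_add_left)
  have LS: "L ` ?S \<subseteq> ?S"
  proof
    fix y assume "y \<in> L ` ?S"
    then obtain v l where "y = L v" "L v = l *\<^sub>R v" by blast
    then have "L y = l *\<^sub>R y" using lin by (simp add: linear_scale)
    then show "y \<in> ?S" by blast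
  qed
  have Lspan: "L x \<in> span ?S" if "x \<in> span ?S" for x
  proof -
    have "L x \<in> L ` span ?S" using that by blast
    also have "\<dots> = span (L ` ?S)" using span_linear_image[OF lin] by simp
    also have "\<dots> \<subseteq> span ?S" using LS by (simp add: span_mono)
    finally show ?thesis .
  qed
  have LW: "L w \<in> W" if "w \<in> W" for w
    using that Lspan sym unfolding W_def by simp
  define f where "f v = inner (L v) v" for v
  define K where "K = W \<inter> sphere 0 1"
  have cK: "compact K" unfolding K_def
    by (intro closed_Int_compact closed_subspace subW compact_sphere)
  have aW: "a \<in> W" using a unfolding W_def by simp
  have "a /\<^sub>R norm a \<in> K" unfolding K_def using a(1) subW aW
    by (simp add: subspace_scale)
  then have neK: "K \<noteq> {}" by blast
  have bl: "bounded_linear L" using lin by (simp add: linear_conv_bounded_linear)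
  have cf: "continuous_on K f" unfolding f_def
    by (intro continuous_intros linear_continuous_on bl)
  obtain v where vK: "v \<in> K" and vmax: "\<And>u. u \<in> K \<Longrightarrow> f u \<le> f v"
    using continuous_attains_sup[OF cK neK cf] by blast
  define M where "M = f v"
  have vW: "v \<in> W" and nv: "norm v = 1" using vK unfolding K_def by auto
  have fscale: "f (c *\<^sub>R u) = c^2 * f u" for c u
    unfolding f_def using lin by (simp add: linear_scale power2_eq_square)
  have bound: "f u \<le> M * (norm u)^2" if "u \<in> W" for u
  proof (cases "u = 0")
    case True then show ?thesis unfolding f_def using lin by (simp add: linear_0)
  next
    case False
    have "u /\<^sub>R norm u \<in> K" unfolding K_def using False that subW by (simp add: subspace_scale)
    then have "f (u /\<^sub>R norm u) \<le> M" using vmax M_def by simp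
    then have "f u / (norm u)^2 \<le> M" using fscale[of "inverse (norm u)" u]
      by (simp add: field_simps power2_eq_square)
    then show ?thesis using False by (simp add: field_simps)
  qed
  have key: "inner (L v) w = 0" if "w \<in> W" "inner v w = 0" for w
  proof -
    define b where "b = inner (L v) w"
    define c where "c = f w - M * (norm w)^2"
    have "2 * t * b + t^2 * c \<le> 0" for t
    proof -
      have "v + t *\<^sub>R w \<in> W" using vW that(1) subW by (simp add: subspace_add subspace_scale)
      then have le: "f (v + t *\<^sub>R w) \<le> M * (norm (v + t *\<^sub>R w))^2" by (rule bound)
      have e1: "f (v + t *\<^sub>R w) = M + 2 * t * b + t^2 * f w"
        unfolding f_def M_def b_def using lin sym[of w v]
        by (simp add: linear_add linear_scale inner_add_left inner_add_right f_def power2_eq_square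
            algebra_simps inner_commute)
      have e0: "(norm (v + t *\<^sub>R w))^2 = inner v v + 2 * t * inner v w + t^2 * inner w w"
        by (simp only: power2_norm_eq_inner) (simp add: inner_add_left inner_add_right inner_commute algebra_simps power2_eq_square)
      have e2: "(norm (v + t *\<^sub>R w))^2 = 1 + t^2 * (norm w)^2"
        unfolding e0 using nv that(2) by (simp add: power2_norm_eq_inner[symmetric])
      show ?thesis using le e1 e2 unfolding c_def by (simp add: algebra_simps)
    qed
    then show ?thesis using quad_zero b_def by blast
  qed
  define u where "u = L v - M *\<^sub>R v"
  have uW: "u \<in> W" unfolding u_def using LW[OF vW] vW subW by (simp add: subspace_diff subspace_scale)
  have uv: "inner v u = 0"
    unfolding u_def M_def f_def using nv by (simp add: inner_diff_right inner_commute power2_norm_eq_inner[symmetric])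
  have "inner u u = inner (L v) u - M * inner v u" unfolding u_def by (simp add: inner_diff_left)
  also have "\<dots> = 0" using key[OF uW uv] uv by simp
  finally have "u = 0" by simp
  then have "v \<in> ?S" unfolding u_def by auto
  then have "inner v v = 0" using vW unfolding W_def by (simp add: span_base)
  then show False using nv by simp
qed



lemma alg_cyc:
  fixes p q w a1 a3 a5 :: real
  assumes d: "p \<noteq> q" "q \<noteq> w" "p \<noteq> w"
    and c1: "(q - w) * a1 = (p - w) * a3"
    and c2: "(w - q) * (- a1) = (p - q) * a5"
    and c3: "(w - p) * (- a3) = (q - p) * (- a5)"
  shows "(a1 * a3 + (a1 - a3) * a5) + ((-a3) * (-a5) + ((-a3) - (-a5)) * a1)
         + (a5 * (-a1) + (a5 - (-a1)) * (-a3)) = 0"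
proof -
  define K where "K = (q - w) * a1"
  have k3: "(p - w) * a3 = K" using c1 unfolding K_def by simp
  have k5: "(p - q) * a5 = K" using c2 unfolding K_def by (simp add: algebra_simps)
  have ex: "(a1 * a3 + (a1 - a3) * a5) + ((-a3) * (-a5) + ((-a3) - (-a5)) * a1)
         + (a5 * (-a1) + (a5 - (-a1)) * (-a3)) = a1 * a5 - a3 * a5 - a1 * a3"
    by (simp add: algebra_simps)
  have h: "(q-w)*(p-w)*(p-q)*(a1*a5 - a3*a5 - a1*a3) =
      ((q-w)*a1)*((p-q)*a5)*(p-w) - ((p-w)*a3)*((p-q)*a5)*(q-w) - ((q-w)*a1)*((p-w)*a3)*(p-q)"
    by (simp add: algebra_simps)
  have "(q-w)*(p-w)*(p-q)*(a1*a5 - a3*a5 - a1*a3) = 0"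
    unfolding h k3 k5 K_def[symmetric] by (simp add: algebra_simps)
  then show ?thesis unfolding ex using d by simp
qed

lemma alg_pair:
  fixes p q w a1 a3 a5 :: real
  shows "(a1 * a3 + (a1 - a3) * a5) + ((-a5) * (-a3) + ((-a5) - (-a3)) * (-a1)) = 2 * a1 * a5"
  by (simp add: algebra_simps)

lemma alg_pair_sign:
  fixes p q w a1 a5 :: real
  assumes "p < q" "w < q" "(w - q) * (- a1) = (p - q) * a5"
  shows "a1 * a5 \<le> 0"
proof -
  have "(p - q) * (a1 * a5) = a1 * ((p - q) * a5)" by (simp add: algebra_simps)
  also have "\<dots> = a1 * ((w - q) * (- a1))" using assms(3) by simp
  also have "\<dots> = (q - w) * a1^2" by (simp add: algebra_simps power2_eq_square)
  finally have "(p - q) * (a1 * a5) = (q - w) * a1^2" .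
  moreover have "(q - w) * a1^2 \<ge> 0" using assms by simp
  ultimately have "(p - q) * (a1 * a5) \<ge> 0" by simp
  then show ?thesis using assms(1) by (simp add: mult_le_0_iff zero_le_mult_iff)
qed



context LAC
begin

definition "Lam = Ricd_eigenvalues br"
definition "rr = n_eig br"
definition "Bs i = onb (eigsp br i)"
definition "EE = (\<Union>i\<in>{1..rr}. Bs i)"
definition "lamf e = inner (LL e) e"

lemma spec: "span {v. \<exists>l. LL v = l *\<^sub>R v} = UNIV"
  by (rule spectral[OF LL_linear LL_sym])

lemma orth_eig:
  assumes "LL u = a *\<^sub>R u" "LL v = b *\<^sub>R v" "a \<noteq> b"
  shows "inner u v = 0"
proof -
  have "a * inner u v = b * inner u v"
    using LL_sym[of u v] assms by simp
  then show ?thesis using assms(3) by simp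
qed

lemma finite_Lam: "finite Lam"
proof -
  define g where "g l = (SOME v. v \<noteq> 0 \<and> LL v = l *\<^sub>R v)" for l
  have g: "g l \<noteq> 0 \<and> LL (g l) = l *\<^sub>R g l" if "l \<in> Lam" for l
  proof -
    from that obtain v where "v \<noteq> 0 \<and> LL v = l *\<^sub>R v"
      unfolding Lam_def Ricd_eigenvalues_def by blast
    then show ?thesis unfolding g_def by (rule someI)
  qed
  have po: "pairwise orthogonal (g ` Lam)"
  proof (unfold pairwise_def, intro ballI impI)
    fix x y assume "x \<in> g ` Lam" "y \<in> g ` Lam" "x \<noteq> y"
    then obtain l1 l2 where "l1 \<in> Lam" "l2 \<in> Lam" "x = g l1" "y = g l2" "l1 \<noteq> l2" by blast
    then show "orthogonal x y" unfolding orthogonal_def using g orth_eig by blast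
  qed
  have "0 \<notin> g ` Lam" using g by auto
  then have "finite (g ` Lam)"
    using pairwise_orthogonal_independent[OF po] finiteI_independent by blast
  moreover have "inj_on g Lam"
  proof (rule inj_onI)
    fix l1 l2 assume "l1 \<in> Lam" "l2 \<in> Lam" "g l1 = g l2"
    then have "l1 *\<^sub>R g l1 = l2 *\<^sub>R g l1" using g by metis
    then show "l1 = l2" using g \<open>l1 \<in> Lam\<close> by (simp add: scaleR_cancel_right)
  qed
  ultimately show ?thesis using finite_imageD by blast
qed

lemma len_sorted: "length (sorted_list_of_set Lam) = rr"
  unfolding rr_def n_eig_def Lam_def by simp

lemma eig_in: "i \<in> {1..rr} \<Longrightarrow> eig br i \<in> Lam"
proof -
  assume i: "i \<in> {1..rr}"
  have "i - 1 < length (sorted_list_of_set Lam)" using len_sorted i by auto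
  then have "sorted_list_of_set Lam ! (i-1) \<in> set (sorted_list_of_set Lam)" by (rule nth_mem)
  then show ?thesis using finite_Lam unfolding eig_def Lam_def by simp
qed

lemma eig_mono: "i \<in> {1..rr} \<Longrightarrow> j \<in> {1..rr} \<Longrightarrow> i < j \<Longrightarrow> eig br i < eig br j"
  unfolding eig_def Lam_def[symmetric]
  using sorted_wrt_nth_less[OF strict_sorted_list_of_set[of Lam], of "i - 1" "j - 1"] len_sorted
  by auto

lemma eig_inj: "i \<in> {1..rr} \<Longrightarrow> j \<in> {1..rr} \<Longrightarrow> eig br i = eig br j \<Longrightarrow> i = j"
  by (metis eig_mono less_irrefl linorder_neqE_nat)

lemma eig_surj: "l \<in> Lam \<Longrightarrow> \<exists>i\<in>{1..rr}. eig br i = l"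
proof -
  assume "l \<in> Lam"
  then have "l \<in> set (sorted_list_of_set Lam)" using finite_Lam by simp
  then obtain k where k: "k < rr" "sorted_list_of_set Lam ! k = l"
    using len_sorted by (metis in_set_conv_nth)
  then show ?thesis unfolding eig_def Lam_def[symmetric]
    by (intro bexI[of _ "Suc k"]) auto
qed

lemma eigsp_subspace: "subspace (eigsp br i)"
  unfolding subspace_def eigsp_def using LL_linear
  by (simp add: linear_add linear_scale linear_0 scaleR_add_right)

lemma is_onb_Bs: "is_onb (eigsp br i) (Bs i)"
proof -
  obtain B where B: "B \<subseteq> eigsp br i" "pairwise orthogonal B" "\<And>x. x \<in> B \<Longrightarrow> norm x = 1"
    "independent B" "span B = eigsp br i"
    using orthonormal_basis_subspace[OF eigsp_subspace] by metis
  then have "is_onb (eigsp br i) B" unfolding is_onb_def using finiteI_independent by blast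
  then show ?thesis unfolding Bs_def onb_def by (rule someI)
qed

lemma Bs_finite: "finite (Bs i)" using is_onb_Bs unfolding is_onb_def by blast
lemma Bs_sub: "Bs i \<subseteq> eigsp br i" using is_onb_Bs unfolding is_onb_def by blast
lemma Bs_span: "span (Bs i) = eigsp br i" using is_onb_Bs unfolding is_onb_def by blast
lemma Bs_orth: "pairwise orthogonal (Bs i)" using is_onb_Bs unfolding is_onb_def by blast
lemma Bs_norm: "e \<in> Bs i \<Longrightarrow> norm e = 1" using is_onb_Bs unfolding is_onb_def by blast
lemma Bs_eig: "e \<in> Bs i \<Longrightarrow> LL e = eig br i *\<^sub>R e" using Bs_sub unfolding eigsp_def by blast

lemma lamf_Bs: "e \<in> Bs i \<Longrightarrow> lamf e = eig br i"
  unfolding lamf_def using Bs_eig Bs_norm by (simp add: power2_norm_eq_inner[symmetric])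

lemma Bs_ne: "i \<in> {1..rr} \<Longrightarrow> Bs i \<noteq> {}"
proof
  assume i: "i \<in> {1..rr}" and "Bs i = {}"
  then have "eigsp br i = {0}" using Bs_span[of i] by simp
  moreover obtain v where "v \<noteq> 0" "LL v = eig br i *\<^sub>R v"
    using eig_in[OF i] unfolding Lam_def Ricd_eigenvalues_def by blast
  ultimately show False unfolding eigsp_def by blast
qed

lemma Bs_disj: "i \<in> {1..rr} \<Longrightarrow> j \<in> {1..rr} \<Longrightarrow> i \<noteq> j \<Longrightarrow> Bs i \<inter> Bs j = {}"
proof -
  assume ij: "i \<in> {1..rr}" "j \<in> {1..rr}" "i \<noteq> j"
  show ?thesis
  proof (rule ccontr)
    assume "Bs i \<inter> Bs j \<noteq> {}"
    then obtain e where "e \<in> Bs i" "e \<in> Bs j" by blast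
    then have "eig br i = eig br j" using lamf_Bs by metis
    then show False using eig_inj ij by blast
  qed
qed

lemma EE_finite: "finite EE" unfolding EE_def using Bs_finite by simp

lemma EE_eig: "e \<in> EE \<Longrightarrow> LL e = lamf e *\<^sub>R e"
  unfolding EE_def using Bs_eig lamf_Bs by fastforce

lemma EE_norm: "e \<in> EE \<Longrightarrow> norm e = 1"
  unfolding EE_def using Bs_norm by blast

lemma memB_iff: "i \<in> {1..rr} \<Longrightarrow> e \<in> EE \<Longrightarrow> e \<in> Bs i \<longleftrightarrow> lamf e = eig br i"
proof -
  assume i: "i \<in> {1..rr}" and e: "e \<in> EE"
  then obtain j where j: "j \<in> {1..rr}" "e \<in> Bs j" unfolding EE_def by blast
  have le: "lamf e = eig br j" by (rule lamf_Bs[OF j(2)])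
  show ?thesis
  proof
    assume "e \<in> Bs i" then show "lamf e = eig br i" by (rule lamf_Bs)
  next
    assume "lamf e = eig br i"
    then have "j = i" using eig_inj[OF j(1) i] le by simp
    then show "e \<in> Bs i" using j by simp
  qed
qed

lemma EE_lam: "e \<in> EE \<Longrightarrow> \<exists>i\<in>{1..rr}. e \<in> Bs i \<and> lamf e = eig br i"
  unfolding EE_def using lamf_Bs by blast

lemma onbE_EE: "onbE EE"
proof -
  have po: "pairwise orthogonal EE"
  proof (unfold pairwise_def, intro ballI impI)
    fix x y assume x: "x \<in> EE" and y: "y \<in> EE" and xy: "x \<noteq> y"
    obtain i where i: "i \<in> {1..rr}" "x \<in> Bs i" using x unfolding EE_def by blast
    obtain j where j: "j \<in> {1..rr}" "y \<in> Bs j" using y unfolding EE_def by blast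
    show "orthogonal x y"
    proof (cases "i = j")
      case True then show ?thesis using Bs_orth[of i] i j xy unfolding pairwise_def by blast
    next
      case False
      then have "eig br i \<noteq> eig br j" using eig_inj i j by blast
      then show ?thesis unfolding orthogonal_def using orth_eig Bs_eig i j by blast
    qed
  qed
  have sp: "span EE = UNIV"
  proof -
    have "{v. \<exists>l. LL v = l *\<^sub>R v} \<subseteq> span EE"
    proof
      fix v assume "v \<in> {v. \<exists>l. LL v = l *\<^sub>R v}"
      then obtain l where l: "LL v = l *\<^sub>R v" by blast
      show "v \<in> span EE"
      proof (cases "v = 0")
        case True then show ?thesis by (simp add: span_zero)
      next
        case False
        then have "l \<in> Lam" using l unfolding Lam_def Ricd_eigenvalues_def by blast
        then obtain i where i: "i \<in> {1..rr}" "eig br i = l" using eig_surj by blast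
        then have "v \<in> span (Bs i)" using Bs_span l unfolding eigsp_def by simp
        moreover have "Bs i \<subseteq> EE" using i unfolding EE_def by blast
        ultimately show ?thesis using span_mono by blast
      qed
    qed
    then have "span {v. \<exists>l. LL v = l *\<^sub>R v} \<subseteq> span EE" by (simp add: span_minimal)
    then show ?thesis using spec by auto
  qed
  show ?thesis unfolding onbE_def using EE_finite po EE_norm sp by blast
qed

lemma sum_EE: "(\<Sum>y\<in>EE. g y) = (\<Sum>i\<in>{1..rr}. \<Sum>y\<in>Bs i. g y)"
  unfolding EE_def by (rule sum.UNION_disjoint) (auto simp: Bs_finite Bs_disj)

end


lemma sum3_swap12:
  "(\<Sum>y\<in>A. \<Sum>x\<in>A. \<Sum>z\<in>A. F x y z) = (\<Sum>x\<in>A. \<Sum>y\<in>A. \<Sum>z\<in>A. F x y z)"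
  by (rule sum.swap)

lemma sum3_rot:
  "(\<Sum>y\<in>A. \<Sum>x\<in>A. \<Sum>z\<in>A. F y z x) = (\<Sum>y\<in>A. \<Sum>x\<in>A. \<Sum>z\<in>A. F x y z)"
proof -
  have 1: "(\<Sum>y\<in>A. \<Sum>x\<in>A. \<Sum>z\<in>A. F y z x) = (\<Sum>y\<in>A. \<Sum>z\<in>A. \<Sum>x\<in>A. F y z x)"
    by (rule sum.cong[OF refl], rule sum.swap[of "\<lambda>x z. F _ z x"])
  have 2: "(\<Sum>x\<in>A. \<Sum>y\<in>A. \<Sum>z\<in>A. F x y z) = (\<Sum>y\<in>A. \<Sum>x\<in>A. \<Sum>z\<in>A. F x y z)"
    by (rule sum.swap[of "\<lambda>x y. \<Sum>z\<in>A. F x y z"])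
  show ?thesis using 1 2 by simp
qed

context LAC
begin

definition "TT x y z = - AA x x z * AA y y z + AA x y z * AA y x z + cc x y z * AA z x y"

lemma codE: "u \<in> EE \<Longrightarrow> v \<in> EE \<Longrightarrow> w \<in> EE \<Longrightarrow>
  (lamf v - lamf w) * AA u v w = (lamf u - lamf w) * AA v u w"
  by (rule cod_rel) (simp_all add: EE_eig)

lemma ccE: "cc u v w = AA u v w - AA v u w"
proof -
  have "inner (lc_alpha br u v - lc_alpha br v u) w = inner (brm br u v) w" using alpha_diff[of u v] by simp
  then show ?thesis unfolding cc_def AA_def inner_diff_left by simp
qed

lemma A_same_zero:
  assumes "u \<in> EE" "v \<in> EE" "z \<in> EE" "lamf u = lamf v" "lamf z \<noteq> lamf u"
  shows "AA u v z = 0"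
proof -
  have "(lamf z - lamf v) * AA u z v = (lamf u - lamf v) * AA z u v" by (rule codE[OF assms(1) assms(3) assms(2)])
  then have "AA u z v = 0" using assms(4,5) by simp
  then show ?thesis using AA_skew[of u v z] by simp
qed

lemma T_zero:
  assumes E: "x \<in> EE" "y \<in> EE" "z \<in> EE" and xy: "lamf x \<noteq> lamf y"
    and z: "lamf z = lamf x \<or> lamf z = lamf y"
  shows "TT x y z = 0"
proof -
  have xx: "AA x x z * AA y y z = 0"
  proof (cases "lamf z = lamf x")
    case True
    then have "AA y y z = 0" using A_same_zero[OF E(2) E(2) E(3) refl] xy by simp
    then show ?thesis by simp
  next
    case False
    then have "AA x x z = 0" using A_same_zero[OF E(1) E(1) E(3) refl] by simp
    then show ?thesis by simp
  qed
  have c1: "(lamf y - lamf z) * AA x y z = (lamf x - lamf z) * AA y x z" by (rule codE[OF E(1) E(2) E(3)])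
  have c2: "(lamf x - lamf y) * AA z x y = (lamf z - lamf y) * AA x z y" by (rule codE[OF E(3) E(1) E(2)])
  have sk: "AA x z y = - AA x y z" by (rule AA_skew)
  show ?thesis
  proof (cases "lamf z = lamf y")
    case True
    then have "AA y x z = 0" using c1 xy by simp
    moreover have "AA z x y = 0" using c2 True xy by simp
    ultimately show ?thesis unfolding TT_def using xx by simp
  next
    case False
    then have zx: "lamf z = lamf x" using z by simp
    then have a1: "AA x y z = 0" using c1 xy by simp
    then have "AA z x y = 0" using c2 zx sk xy by simp
    then show ?thesis unfolding TT_def ccE using xx a1 by simp
  qed
qed

lemma T_pair:
  assumes E: "x \<in> EE" "y \<in> EE" "z \<in> EE" and lt: "lamf x < lamf y" "lamf z < lamf y"
  shows "TT x y z + TT z y x \<le> 0"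
proof -
  have "AA y y z = 0" using A_same_zero[OF E(2) E(2) E(3) refl] lt by simp
  then have xx1: "AA x x z * AA y y z = 0" by simp
  have "AA y y x = 0" using A_same_zero[OF E(2) E(2) E(1) refl] lt by simp
  then have xx2: "AA z z x * AA y y x = 0" by simp
  have c2: "(lamf z - lamf y) * AA x z y = (lamf x - lamf y) * AA z x y" by (rule codE[OF E(1) E(3) E(2)])
  have s1: "AA x z y = - AA x y z" and s2: "AA z y x = - AA z x y" and s3: "AA y z x = - AA y x z"
    by (rule AA_skew)+
  have y1: "AA y y z = 0" using A_same_zero[OF E(2) E(2) E(3) refl] lt by simp
  have y2: "AA y y x = 0" using A_same_zero[OF E(2) E(2) E(1) refl] lt by simp
  have "TT x y z + TT z y x = 2 * AA x y z * AA z x y"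
    unfolding TT_def ccE y1 y2 s1 s2 s3 by (simp add: algebra_simps)
  moreover have "AA x y z * AA z x y \<le> 0"
    using alg_pair_sign[of "lamf x" "lamf y" "lamf z" "AA x y z" "AA z x y"] lt c2 s1 by simp
  ultimately show ?thesis by simp
qed

lemma T_cyc:
  assumes E: "x \<in> EE" "y \<in> EE" "z \<in> EE"
    and d: "lamf x \<noteq> lamf y" "lamf y \<noteq> lamf z" "lamf x \<noteq> lamf z"
  shows "TT x y z + TT y z x + TT z x y = 0"
proof -
  have "AA y y z = 0" using A_same_zero[OF E(2) E(2) E(3) refl] d by simp
  then have xx1: "AA x x z * AA y y z = 0" by simp
  have "AA z z x = 0" using A_same_zero[OF E(3) E(3) E(1) refl] d by simp
  then have xx2: "AA y y x * AA z z x = 0" by simp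
  have "AA x x y = 0" using A_same_zero[OF E(1) E(1) E(2) refl] d by simp
  then have xx3: "AA z z y * AA x x y = 0" by simp
  have c1: "(lamf y - lamf z) * AA x y z = (lamf x - lamf z) * AA y x z" by (rule codE[OF E(1) E(2) E(3)])
  have c2: "(lamf z - lamf y) * AA x z y = (lamf x - lamf y) * AA z x y" by (rule codE[OF E(1) E(3) E(2)])
  have c3: "(lamf z - lamf x) * AA y z x = (lamf y - lamf x) * AA z y x" by (rule codE[OF E(2) E(3) E(1)])
  have s1: "AA x z y = - AA x y z" and s2: "AA z y x = - AA z x y" and s3: "AA y z x = - AA y x z"
    by (rule AA_skew)+
  have z1: "AA y y z = 0" using A_same_zero[OF E(2) E(2) E(3) refl] d by simp
  have z2: "AA z z x = 0" using A_same_zero[OF E(3) E(3) E(1) refl] d by simp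
  have z3: "AA x x y = 0" using A_same_zero[OF E(1) E(1) E(2) refl] d by simp
  have c2': "(lamf z - lamf y) * (- AA x y z) = (lamf x - lamf y) * AA z x y" using c2 unfolding s1 .
  have c3': "(lamf z - lamf x) * (- AA y x z) = (lamf y - lamf x) * (- AA z x y)" using c3 unfolding s2 s3 .
  have "(AA x y z * AA y x z + (AA x y z - AA y x z) * AA z x y) +
        ((- AA y x z) * (- AA z x y) + ((- AA y x z) - (- AA z x y)) * AA x y z) +
        (AA z x y * (- AA x y z) + (AA z x y - (- AA x y z)) * (- AA y x z)) = 0"
    by (rule alg_cyc[OF d(1) d(2) d(3) c1 c2' c3'])
  then show ?thesis
    unfolding TT_def ccE z1 z2 z3 s1 s2 s3 by simp
qed

end


context LAC
begin

definition "KK x y = inner (Rd br x y y) x"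

lemma KK_sum: "KK x y = (\<Sum>z\<in>EE. TT x y z)"
  unfolding KK_def TT_def by (rule K_expand[OF onbE_EE])

lemma F1: "y \<in> Bs i \<Longrightarrow> (\<Sum>x\<in>EE. KK x y) = eig br i"
proof -
  assume y: "y \<in> Bs i"
  have "(\<Sum>x\<in>EE. KK x y) = Ricd br y y" unfolding KK_def by (rule Ricd_trace[OF onbE_EE, symmetric])
  also have "\<dots> = lamf y" unfolding lamf_def by (rule LL_inner[symmetric])
  also have "\<dots> = eig br i" by (rule lamf_Bs[OF y])
  finally show ?thesis .
qed

lemma sd_eq: "sd_i br i = (\<Sum>y\<in>Bs i. \<Sum>x\<in>Bs i. KK x y)"
  unfolding sd_i_def Ricd_i_def Bs_def KK_def ..

definition "XX i = (\<Sum>y\<in>Bs i. \<Sum>x\<in>EE - Bs i. KK x y)"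

lemma Bs_sub_EE: "i \<in> {1..rr} \<Longrightarrow> Bs i \<subseteq> EE" unfolding EE_def by blast

lemma eq_i:
  assumes i: "i \<in> {1..rr}"
  shows "eig br i * real (card (Bs i)) = sd_i br i + XX i"
proof -
  have "(\<Sum>y\<in>Bs i. \<Sum>x\<in>EE. KK x y) = (\<Sum>y\<in>Bs i. eig br i)"
    by (rule sum.cong[OF refl]) (rule F1)
  also have "\<dots> = eig br i * real (card (Bs i))" by simp
  finally have 1: "(\<Sum>y\<in>Bs i. \<Sum>x\<in>EE. KK x y) = eig br i * real (card (Bs i))" .
  have "(\<Sum>x\<in>EE. KK x y) = (\<Sum>x\<in>EE - Bs i. KK x y) + (\<Sum>x\<in>Bs i. KK x y)" for y
    by (rule sum.subset_diff[OF Bs_sub_EE[OF i] EE_finite])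
  then have "(\<Sum>y\<in>Bs i. \<Sum>x\<in>EE. KK x y) = XX i + sd_i br i"
    unfolding XX_def sd_eq by (simp add: sum.distrib)
  then show ?thesis using 1 by simp
qed

lemma XX_r:
  assumes r1: "1 \<le> rr"
  shows "XX rr \<le> 0"
proof -
  have rI: "rr \<in> {1..rr}" using r1 by simp
  define D where "D = EE - Bs rr"
  have DE: "D \<subseteq> EE" unfolding D_def by blast
  have fD: "finite D" using EE_finite DE finite_subset by blast
  have each: "(\<Sum>x\<in>D. KK x y) \<le> 0" if y: "y \<in> Bs rr" for y
  proof -
    have yE: "y \<in> EE" using y Bs_sub_EE[OF rI] by blast
    have ly: "lamf y = eig br rr" by (rule lamf_Bs[OF y])
    have lt: "lamf x < lamf y" if x: "x \<in> D" for x
    proof -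
      have xE: "x \<in> EE" using x DE by blast
      obtain j where j: "j \<in> {1..rr}" "x \<in> Bs j" "lamf x = eig br j" using EE_lam[OF xE] by blast
      have "j \<noteq> rr" using j x unfolding D_def by blast
      then have "j < rr" using j(1) by simp
      then show ?thesis using eig_mono[OF j(1) rI] j(3) ly by simp
    qed
    have kk: "KK x y = (\<Sum>z\<in>D. TT x y z)" if x: "x \<in> D" for x
    proof -
      have xE: "x \<in> EE" using x DE by blast
      have "KK x y = (\<Sum>z\<in>D. TT x y z) + (\<Sum>z\<in>Bs rr. TT x y z)"
        unfolding KK_sum D_def by (rule sum.subset_diff[OF Bs_sub_EE[OF rI] EE_finite])
      moreover have "(\<Sum>z\<in>Bs rr. TT x y z) = 0"
      proof (rule sum.neutral, rule ballI)
        fix z assume z: "z \<in> Bs rr"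
        have zE: "z \<in> EE" using z Bs_sub_EE[OF rI] by blast
        have "lamf z = lamf y" using lamf_Bs[OF z] ly by simp
        then show "TT x y z = 0" using T_zero[OF xE yE zE] lt[OF x] by simp
      qed
      ultimately show ?thesis by simp
    qed
    define S where "S = (\<Sum>x\<in>D. \<Sum>z\<in>D. TT x y z)"
    have S2: "S = (\<Sum>x\<in>D. \<Sum>z\<in>D. TT z y x)" unfolding S_def by (rule sum.swap)
    have "2 * S = (\<Sum>x\<in>D. \<Sum>z\<in>D. TT x y z + TT z y x)"
      using S2 unfolding S_def by (simp add: sum.distrib)
    also have "\<dots> \<le> 0"
    proof (rule sum_nonpos, rule sum_nonpos)
      fix x z assume x: "x \<in> D" and z: "z \<in> D"
      have xE: "x \<in> EE" using x DE by blast
      have zE: "z \<in> EE" using z DE by blast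
      show "TT x y z + TT z y x \<le> 0"
        by (rule T_pair[OF xE yE zE lt[OF x] lt[OF z]])
    qed
    finally have "S \<le> 0" by simp
    moreover have "(\<Sum>x\<in>D. KK x y) = S" unfolding S_def using kk by simp
    ultimately show ?thesis by simp
  qed
  show ?thesis unfolding XX_def D_def[symmetric] by (rule sum_nonpos) (rule each)
qed

definition "GG x y z = (if lamf x \<noteq> lamf y \<and> lamf y \<noteq> lamf z \<and> lamf x \<noteq> lamf z then TT x y z else 0)"

lemma XX_G:
  assumes i: "i \<in> {1..rr}" and y: "y \<in> Bs i"
  shows "(\<Sum>x\<in>EE - Bs i. KK x y) = (\<Sum>x\<in>EE. \<Sum>z\<in>EE. GG x y z)"
proof -
  have yE: "y \<in> EE" using y Bs_sub_EE[OF i] by blast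
  have ly: "lamf y = eig br i" by (rule lamf_Bs[OF y])
  have set: "EE - Bs i = {x \<in> EE. lamf x \<noteq> lamf y}" using memB_iff[OF i] ly by auto
  have "(\<Sum>x\<in>EE - Bs i. KK x y) = (\<Sum>x\<in>EE. if lamf x \<noteq> lamf y then KK x y else 0)"
    unfolding set by (rule sum.inter_filter[OF EE_finite])
  also have "\<dots> = (\<Sum>x\<in>EE. \<Sum>z\<in>EE. GG x y z)"
  proof (rule sum.cong[OF refl])
    fix x assume xE: "x \<in> EE"
    show "(if lamf x \<noteq> lamf y then KK x y else 0) = (\<Sum>z\<in>EE. GG x y z)"
    proof (cases "lamf x = lamf y")
      case True then show ?thesis unfolding GG_def by simp
    next
      case False
      have "KK x y = (\<Sum>z\<in>EE. GG x y z)" unfolding KK_sum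
      proof (rule sum.cong[OF refl])
        fix z assume zE: "z \<in> EE"
        show "TT x y z = GG x y z"
        proof (cases "lamf z = lamf x \<or> lamf z = lamf y")
          case True
          have "TT x y z = 0" by (rule T_zero[OF xE yE zE False True])
          moreover have "GG x y z = 0" unfolding GG_def using True by auto
          ultimately show ?thesis by simp
        next
          case False2: False
          then show ?thesis using False unfolding GG_def by auto
        qed
      qed
      then show ?thesis using False by simp
    qed
  qed
  finally show ?thesis .
qed

lemma XX_total: "(\<Sum>i\<in>{1..rr}. XX i) = 0"
proof -
  define S where "S = (\<Sum>y\<in>EE. \<Sum>x\<in>EE. \<Sum>z\<in>EE. GG x y z)"
  have "(\<Sum>i\<in>{1..rr}. XX i) = (\<Sum>i\<in>{1..rr}. \<Sum>y\<in>Bs i. \<Sum>x\<in>EE. \<Sum>z\<in>EE. GG x y z)"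
    unfolding XX_def by (intro sum.cong refl XX_G) auto
  also have "\<dots> = S" unfolding S_def by (rule sum_EE[symmetric])
  finally have 1: "(\<Sum>i\<in>{1..rr}. XX i) = S" .
  have R1: "(\<Sum>y\<in>EE. \<Sum>x\<in>EE. \<Sum>z\<in>EE. GG y z x) = S" unfolding S_def by (rule sum3_rot)
  have R2: "S = (\<Sum>y\<in>EE. \<Sum>x\<in>EE. \<Sum>z\<in>EE. GG z x y)"
    unfolding S_def using sum3_rot[of "\<lambda>a b c. GG c a b" EE] by simp
  have "3 * S = (\<Sum>y\<in>EE. \<Sum>x\<in>EE. \<Sum>z\<in>EE. GG x y z + GG y z x + GG z x y)"
    using R1 R2 unfolding S_def by (simp add: sum.distrib)
  also have "\<dots> = 0"
  proof (intro sum.neutral ballI)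
    fix y x z assume yE: "y \<in> EE" and xE: "x \<in> EE" and zE: "z \<in> EE"
    show "GG x y z + GG y z x + GG z x y = 0"
    proof (cases "lamf x \<noteq> lamf y \<and> lamf y \<noteq> lamf z \<and> lamf x \<noteq> lamf z")
      case True
      then have "lamf y \<noteq> lamf z \<and> lamf z \<noteq> lamf x \<and> lamf y \<noteq> lamf x"
        "lamf z \<noteq> lamf x \<and> lamf x \<noteq> lamf y \<and> lamf z \<noteq> lamf y" by auto
      then show ?thesis using True T_cyc[OF xE yE zE] unfolding GG_def by simp
    next
      case False
      have n1: "\<not> (lamf y \<noteq> lamf z \<and> lamf z \<noteq> lamf x \<and> lamf y \<noteq> lamf x)"
        using False by auto
      have n2: "\<not> (lamf z \<noteq> lamf x \<and> lamf x \<noteq> lamf y \<and> lamf z \<noteq> lamf y)"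
        using False by auto
      have "GG x y z = 0" unfolding GG_def by (rule if_not_P[OF False])
      moreover have "GG y z x = 0" unfolding GG_def by (rule if_not_P[OF n1])
      moreover have "GG z x y = 0" unfolding GG_def by (rule if_not_P[OF n2])
      ultimately show ?thesis by simp
    qed
  qed
  finally show ?thesis using 1 by simp
qed

end


context LAC
begin

lemma rr_ne0: "rr \<noteq> 0"
proof
  assume "rr = 0"
  then have "EE = {}" unfolding EE_def by simp
  then have "span EE = {0}" by simp
  moreover have "span EE = UNIV" using onbE_EE unfolding onbE_def by blast
  ultimately have z: "x = 0" if "x \<in> span EE" for x using that by auto
  have "Basis \<inter> span EE = {}" using z nonzero_Basis by blast
  then show False using \<open>span EE = UNIV\<close> nonempty_Basis by simp
qed

lemma rr_ne1:
  assumes np: "\<exists>X Y Z. nabla_Ricd br X Y Z \<noteq> 0"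
  shows "rr \<noteq> 1"
proof
  assume r1: "rr = 1"
  define c where "c = eig br 1"
  have Ec: "LL e = c *\<^sub>R e" if "e \<in> EE" for e
    using that unfolding EE_def r1 c_def using Bs_eig by auto
  have Lc: "LL v = c *\<^sub>R v" for v
  proof -
    have "LL v = (\<Sum>e\<in>EE. inner v e *\<^sub>R LL e)" by (rule onbE_lin[OF onbE_EE LL_linear])
    also have "\<dots> = (\<Sum>e\<in>EE. c *\<^sub>R (inner v e *\<^sub>R e))"
      by (rule sum.cong[OF refl]) (simp add: Ec)
    also have "\<dots> = c *\<^sub>R (\<Sum>e\<in>EE. inner v e *\<^sub>R e)" by (rule scaleR_sum_right[symmetric])
    also have "\<dots> = c *\<^sub>R v" by (simp add: onbE_expand[OF onbE_EE])
    finally show ?thesis .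
  qed
  obtain X Y Z where ne: "nabla_Ricd br X Y Z \<noteq> 0" using np by blast
  have a: "Ricd br (lc_alpha br X Y) Z = c * AA X Y Z"
    using Ricd_sym[of "lc_alpha br X Y" Z] LL_inner[of Z "lc_alpha br X Y"] Lc[of Z]
    by (simp add: AA_def inner_commute)
  have b: "Ricd br Y (lc_alpha br X Z) = c * AA X Z Y"
    using LL_inner[of Y "lc_alpha br X Z"] Lc[of Y] by (simp add: AA_def inner_commute)
  have "nabla_Ricd br X Y Z = 0"
    unfolding nabla_Ricd_def a b AA_skew[of X Z Y] by simp
  then show False using ne by simp
qed

lemma abel_zero:
  assumes i: "i \<in> {1..rr}" and ab: "abelian_in_m br (eigsp br i)"
  shows "sd_i br i = 0"
proof -
  have bz: "brm br u v = 0" if "u \<in> Bs i" "v \<in> Bs i" for u v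
    using ab that Bs_sub unfolding abelian_in_m_def by blast
  have Az: "AA u v z = 0" if u: "u \<in> Bs i" and v: "v \<in> Bs i" and z: "z \<in> EE" for u v z
  proof (cases "z \<in> Bs i")
    case True
    then show ?thesis unfolding AA_def alpha_inner using bz u v by simp
  next
    case False
    have uE: "u \<in> EE" and vE: "v \<in> EE" using u v Bs_sub_EE[OF i] by blast+
    have "lamf z \<noteq> eig br i" using memB_iff[OF i z] False by simp
    then show ?thesis using A_same_zero[OF uE vE z] lamf_Bs[OF u] lamf_Bs[OF v] by simp
  qed
  have "TT x y z = 0" if "x \<in> Bs i" "y \<in> Bs i" "z \<in> EE" for x y z
    unfolding TT_def cc_def using Az[of x x z] Az[of x y z] bz[of x y] that by simp
  then show ?thesis unfolding sd_eq KK_sum by simp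
qed

lemma main1:
  assumes np: "\<exists>X Y Z. nabla_Ricd br X Y Z \<noteq> 0"
    and hyp: "\<forall>i\<in>{1..rr - 1}. sd_i br i \<ge> 0"
  shows "sd_i br rr \<noteq> 0"
proof
  assume s0: "sd_i br rr = 0"
  have r2: "2 \<le> rr" using rr_ne0 rr_ne1[OF np] by linarith
  have rI: "rr \<in> {1..rr}" and oneI: "1 \<in> {1..rr}" using r2 by auto
  define d where "d i = real (card (Bs i))" for i
  have dpos: "d i > 0" if "i \<in> {1..rr}" for i
    unfolding d_def using Bs_ne[OF that] Bs_finite[of i] by (simp add: card_gt_0_iff)
  have eq: "eig br i * d i = sd_i br i + XX i" if "i \<in> {1..rr}" for i
    unfolding d_def by (rule eq_i[OF that])
  have "eig br rr * d rr \<le> 0" using eq[OF rI] s0 XX_r r2 by simp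
  then have er: "eig br rr \<le> 0" using dpos[OF rI] by (simp add: mult_le_0_iff)
  have sall: "sd_i br i \<ge> 0" if "i \<in> {1..rr}" for i
  proof (cases "i = rr")
    case True then show ?thesis using s0 by simp
  next
    case False then have "i \<in> {1..rr - 1}" using that by auto
    then show ?thesis using hyp by blast
  qed
  have "(\<Sum>i\<in>{1..rr}. eig br i * d i) = (\<Sum>i\<in>{1..rr}. sd_i br i) + (\<Sum>i\<in>{1..rr}. XX i)"
    by (simp add: eq sum.distrib)
  also have "\<dots> = (\<Sum>i\<in>{1..rr}. sd_i br i)" using XX_total by simp
  also have "\<dots> \<ge> 0" by (rule sum_nonneg) (rule sall)
  finally have ge: "(\<Sum>i\<in>{1..rr}. eig br i * d i) \<ge> 0" .
  have le: "eig br i * d i \<le> 0" if "i \<in> {1..rr}" for i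
  proof -
    have "eig br i \<le> eig br rr"
      using eig_mono[OF that rI] by (cases "i = rr") (auto simp: less_le, metis atLeastAtMost_iff that le_less)
    then have "eig br i \<le> 0" using er by simp
    then show ?thesis using dpos[OF that] by (simp add: mult_le_0_iff)
  qed
  have "eig br 1 < eig br rr" using eig_mono[OF oneI rI] r2 by simp
  then have lt1: "eig br 1 * d 1 < 0" using er dpos[OF oneI] by (simp add: mult_neg_pos)
  have "(\<Sum>i\<in>{1..rr}. eig br i * d i) = eig br 1 * d 1 + (\<Sum>i\<in>{1..rr} - {1}. eig br i * d i)"
    by (rule sum.remove[OF finite_atLeastAtMost oneI])
  also have "(\<Sum>i\<in>{1..rr} - {1}. eig br i * d i) \<le> 0"
    by (rule sum_nonpos) (rule le, blast)
  then have "eig br 1 * d 1 + (\<Sum>i\<in>{1..rr} - {1}. eig br i * d i) < 0" using lt1 by simp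
  finally show False using ge by simp
qed

end

theorem corollary3p4:
  fixes br :: "('h::real_vector \<times> 'm::euclidean_space) \<Rightarrow> ('h \<times> 'm) \<Rightarrow> ('h \<times> 'm)"
  assumes "lie_algebra br"
    and "\<exists>B::'h set. finite B \<and> span B = UNIV"
    and "reductive_invariant br"
    and "Ricd_codazzi br"
    and "\<exists>X Y Z. nabla_Ricd br X Y Z \<noteq> 0"
  shows "((\<forall>i\<in>{1..n_eig br - 1}. sd_i br i \<ge> 0) \<longrightarrow> sd_i br (n_eig br) \<noteq> 0)
         \<and> \<not> (\<forall>i\<in>{1..n_eig br}. abelian_in_m br (eigsp br i))"
proof -
  interpret LAC br
    by (unfold_locales) (use assms in auto)
  have p1: "(\<forall>i\<in>{1..rr - 1}. sd_i br i \<ge> 0) \<longrightarrow> sd_i br rr \<noteq> 0"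
    using main1[OF assms(5)] by blast
  have p2: "\<not> (\<forall>i\<in>{1..rr}. abelian_in_m br (eigsp br i))"
  proof
    assume all: "\<forall>i\<in>{1..rr}. abelian_in_m br (eigsp br i)"
    then have z: "sd_i br i = 0" if "i \<in> {1..rr}" for i using abel_zero that by blast
    have "rr \<in> {1..rr}" using rr_ne0 by simp
    then have "sd_i br rr = 0" by (rule z)
    moreover have "\<forall>i\<in>{1..rr - 1}. sd_i br i \<ge> 0"
    proof
      fix i assume "i \<in> {1..rr - 1}"
      then have "i \<in> {1..rr}" by auto
      then show "sd_i br i \<ge> 0" using z by simp
    qed
    ultimately show False using p1 by simp
  qed
  show ?thesis using p1 p2 unfolding rr_def by simp
qed


end
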